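(* Let $K\ge 1$ and $N_1,\ldots,N_K\ge 1$ be integers, let $T\ge 1$, and let $\Delta_N=\{\boldsymbol u\in\mathbb R_+^N:\sum_{i=1}^N u_i=1\}$. Let $\ell_t:\Delta_{N_1}\times\cdots\times\Delta_{N_K}\to\mathbb R$, $t\ge 1$, be differentiable and jointly convex loss functions. Assume that for every $k\in\{1,\ldots,K\}$ there is $G^{(k)}>0$ with $$\max_{1\le t\le T}\ \sup_{\boldsymbol u^{(1)},\ldots,\boldsymbol u^{(K)}}\ \max_{1\le i\le N_k}\Big|\partial_{u^{(k)}_i}\ell_t\big(\boldsymbol u^{(1)},\ldots,\boldsymbol u^{(K)}\big)\Big|\le G^{(k)}.$$ Then the Multi-variable Exponentiated Gradient algorithm (described in the context) run with $\eta^{(k)}=\sqrt{2\log(N_k)/T}\,/G^{(k)}$ for $k=1,\ldots,K$ satisfies $$\sum_{t=1}^T \ell_t\big(\hat{\boldsymbol u}^{(1)}_t,\ldots,\hat{\boldsymbol u}^{(K)}_t\big)-\min_{(\boldsymbol u^{(1)},\ldots,\boldsymbol u^{(K)})\in\Delta_{N_1}\times\cdots\times\Delta_{N_K}}\sum_{t=1}^T\ell_t\big(\boldsymbol u^{(1)},\ldots,\boldsymbol u^{(K)}\big)\le\sqrt{2T}\sum_{k=1}^K G^{(k)}\sqrt{\log N_k}.$$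
   Context: Multi-variable Exponentiated Gradient algorithm with parameters $\eta^{(1)},\ldots,\eta^{(K)}>0$ (the losses may be chosen adversarially, $\ell_t$ being revealed after the output of round $t$): initialize $\hat{\boldsymbol u}^{(k)}_1=(1/N_k,\ldots,1/N_k)\in\Delta_{N_k}$ for all $k$. At each round $t=1,2,\ldots$, output $(\hat{\boldsymbol u}^{(1)}_t,\ldots,\hat{\boldsymbol u}^{(K)}_t)$, observe $\ell_t$, and set for each $k$ and $i\in\{1,\ldots,N_k\}$ $$\hat u^{(k)}_{t+1,i}=\frac{\exp\big(-\eta^{(k)}\sum_{s=1}^t\partial_{u^{(k)}_i}\ell_s(\hat{\boldsymbol u}^{(1)}_s,\ldots,\hat{\boldsymbol u}^{(K)}_s)\big)}{\sum_{i'=1}^{N_k}\exp\big(-\eta^{(k)}\sum_{s=1}^t\partial_{u^{(k)}_{i'}}\ell_s(\hat{\boldsymbol u}^{(1)}_s,\ldots,\hat{\boldsymbol u}^{(K)}_s)\big)},$$ where $\partial_{u^{(k)}_i}\ell_s$ is the partial derivative of $\ell_s$ with respect to the $i$-th coordinate of the $k$-th block variable. *)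

theory Defs
  imports "HOL-Analysis.Analysis"
begin

text \<open>Coordinates of the product space are indexed by a finite type 'c; the
  block (k-th simplex) a coordinate belongs to is given by blk :: 'c => 'k.
  Block k has N_k = card {c. blk c = k} coordinates.\<close>

definition block_size :: "('c::finite \<Rightarrow> 'k) \<Rightarrow> 'k \<Rightarrow> nat" where
  "block_size blk k = card {c. blk c = k}"

definition simplex_prod :: "('c::finite \<Rightarrow> 'k) \<Rightarrow> (real^'c) set" where
  "simplex_prod blk = {u. (\<forall>c. 0 \<le> u $ c) \<and> (\<forall>k. (\<Sum>c\<in>{c. blk c = k}. u $ c) = 1)}"

definition partial_at :: "(real^'c::finite \<Rightarrow> real) \<Rightarrow> real^'c \<Rightarrow> 'c \<Rightarrow> real" where
  "partial_at f u c = frechet_derivative f (at u) (axis c 1)"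

definition grad_vec :: "(real^'c::finite \<Rightarrow> real) \<Rightarrow> real^'c \<Rightarrow> real^'c" where
  "grad_vec f u = (\<chi> c. partial_at f u c)"

definition eg_weights :: "('c::finite \<Rightarrow> 'k) \<Rightarrow> ('k \<Rightarrow> real) \<Rightarrow> real^'c \<Rightarrow> real^'c" where
  "eg_weights blk \<eta> L = (\<chi> c. exp (- \<eta> (blk c) * L $ c) /
      (\<Sum>c'\<in>{c'. blk c' = blk c}. exp (- \<eta> (blk c) * L $ c')))"

definition uniform_init :: "('c::finite \<Rightarrow> 'k) \<Rightarrow> real^'c" where
  "uniform_init blk = (\<chi> c. 1 / real (block_size blk (blk c)))"

text \<open>Output at round n+1 given the cumulative gradient of rounds 1..n.\<close>
definition mweg_from :: "('c::finite \<Rightarrow> 'k) \<Rightarrow> ('k \<Rightarrow> real) \<Rightarrow> nat \<Rightarrow> real^'c \<Rightarrow> real^'c" where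
  "mweg_from blk \<eta> n L = (if n = 0 then uniform_init blk else eg_weights blk \<eta> L)"

primrec cum_grad :: "(nat \<Rightarrow> real^'c::finite \<Rightarrow> real) \<Rightarrow> ('c \<Rightarrow> 'k) \<Rightarrow> ('k \<Rightarrow> real) \<Rightarrow> nat \<Rightarrow> real^'c" where
  "cum_grad loss blk \<eta> 0 = 0"
| "cum_grad loss blk \<eta> (Suc n) = cum_grad loss blk \<eta> n
     + grad_vec (loss (Suc n)) (mweg_from blk \<eta> n (cum_grad loss blk \<eta> n))"

definition mweg :: "(nat \<Rightarrow> real^'c::finite \<Rightarrow> real) \<Rightarrow> ('c \<Rightarrow> 'k) \<Rightarrow> ('k \<Rightarrow> real) \<Rightarrow> nat \<Rightarrow> real^'c" where
  "mweg loss blk \<eta> t = mweg_from blk \<eta> (t - 1) (cum_grad loss blk \<eta> (t - 1))"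

end

theory Submission
  imports Defs "HOL-Probability.Hoeffding"
begin


lemma hoeff_discrete:
  fixes C :: "'c set" and p x :: "'c \<Rightarrow> real" and l a b :: real
  assumes fin: "finite C" and p0: "\<And>c. c \<in> C \<Longrightarrow> p c \<ge> 0" and p1: "(\<Sum>c\<in>C. p c) = 1"
    and xab: "\<And>c. c \<in> C \<Longrightarrow> x c \<in> {a..b}" and l: "l \<ge> 0"
  shows "(\<Sum>c\<in>C. p c * exp (l * x c)) \<le> exp (l * (\<Sum>c\<in>C. p c * x c) + l\<^sup>2 * (b - a)\<^sup>2 / 8)"
proof -
  define \<mu> where "\<mu> = (\<Sum>c\<in>C. p c * x c)"
  have "C \<noteq> {}" using p1 by auto
  then obtain c0 where "c0 \<in> C" by auto
  have ab: "a \<le> b" using xab[OF \<open>c0 \<in> C\<close>] by auto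
  have mua: "\<mu> \<ge> a"
  proof -
    have "(\<Sum>c\<in>C. p c * a) \<le> \<mu>" unfolding \<mu>_def
      by (intro sum_mono mult_left_mono) (use xab p0 in auto)
    thus ?thesis by (simp add: sum_distrib_right[symmetric] p1)
  qed
  have mub: "\<mu> \<le> b"
  proof -
    have "\<mu> \<le> (\<Sum>c\<in>C. p c * b)" unfolding \<mu>_def
      by (intro sum_mono mult_left_mono) (use xab p0 in auto)
    thus ?thesis by (simp add: sum_distrib_right[symmetric] p1)
  qed
  show ?thesis
  proof (cases "a = b")
    case True
    hence "\<And>c. c \<in> C \<Longrightarrow> x c = a" using xab by force
    hence "(\<Sum>c\<in>C. p c * exp (l * x c)) = exp (l * a)" "\<mu> = a"
      by (simp_all add: \<mu>_def sum_distrib_right[symmetric] p1)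
    thus ?thesis using True by (simp add: \<mu>_def)
  next
    case False
    hence ab': "a < b" using ab by auto
    have pt: "exp (l * x c) \<le> (b - x c) / (b - a) * exp (l*a) + (x c - a)/(b-a) * exp (l*b)"
      if "c \<in> C" for c
    proof -
      define y where "y = (b - x c) / (b-a)"
      have y: "y \<in> {0..1}" using xab[OF that] ab' by (auto simp: y_def)
      have "exp (l * ((1 - y) *\<^sub>R b + y *\<^sub>R a)) \<le> (1 - y) * exp (l * b) + y * exp (l * a)"
        using y l by (intro convex_onD[OF convex_on_exp]) auto
      also have "(1 - y) *\<^sub>R b + y *\<^sub>R a = x c"
        using ab' by (simp add: y_def divide_simps) (simp add: algebra_simps)
      also have "1 - y = (x c - a) / (b - a)"
        using ab' by (simp add: field_simps y_def)
      finally show ?thesis by (simp add: y_def)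
    qed
    have "(\<Sum>c\<in>C. p c * exp (l * x c)) \<le> (\<Sum>c\<in>C. p c * ((b - x c) / (b - a) * exp (l*a) + (x c - a)/(b-a) * exp (l*b)))"
      by (intro sum_mono mult_left_mono pt p0)
    also have "\<dots> = (\<Sum>c\<in>C. p c * ((b * exp (l*a) - a * exp (l*b))/(b-a)) + (p c * x c) * ((exp (l*b) - exp (l*a))/(b-a)))"
      using ab' by (intro sum.cong refl) (simp add: field_simps)
    also have "\<dots> = (b * exp (l*a) - a * exp (l*b))/(b-a) + \<mu> * ((exp (l*b) - exp (l*a))/(b-a))"
      by (simp only: sum.distrib \<mu>_def p1 flip: sum_distrib_right)
    also have "\<dots> = (b - \<mu>) / (b - a) * exp (l*a) + (\<mu> - a)/(b-a) * exp (l*b)"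
      using ab' by (simp add: field_simps)
    finally have 1: "(\<Sum>c\<in>C. p c * exp (l * x c)) \<le> (b - \<mu>) / (b - a) * exp (l*a) + (\<mu> - a)/(b-a) * exp (l*b)" .
    define q where "q = (\<mu> - a) / (b - a)"
    define h where "h = l * (b - a)"
    have q0: "q \<ge> 0" using mua ab' by (simp add: q_def)
    have h0: "h \<ge> 0" using l ab' by (simp add: h_def)
    have pos: "1 + q * (exp h - 1) > 0"
      using q0 h0 by (smt (verit) mult_nonneg_nonneg one_le_exp_iff)
    have aux: "-h * q + ln (1 + q * (exp h - 1)) \<le> h\<^sup>2 / 8"
      by (rule Hoeffdings_lemma_aux[OF h0 q0])
    have eq: "(b - \<mu>) / (b - a) * exp (l*a) + (\<mu> - a)/(b-a) * exp (l*b) = exp (l*a) * (1 + q * (exp h - 1))"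
    proof -
      have ebh: "exp (l*a) * exp h = exp (l*b)" by (simp add: h_def algebra_simps flip: exp_add)
      have "exp (l*a) * (1 + q * (exp h - 1)) = exp (l*a) + q * exp (l*b) - q * exp (l*a)"
        using ebh by (simp add: algebra_simps)
      also have "\<dots> = (b - \<mu>) / (b - a) * exp (l*a) + (\<mu> - a)/(b-a) * exp (l*b)"
        using ab' by (simp add: q_def field_simps)
      finally show ?thesis by simp
    qed
    have "exp (l*a) * (1 + q * (exp h - 1)) = exp (l * a + ln (1 + q * (exp h - 1)))"
      using pos by (simp add: exp_add)
    also have "\<dots> \<le> exp (l * \<mu> + l\<^sup>2 * (b - a)\<^sup>2 / 8)"
    proof -
      have "l * \<mu> = l * a + h * q" using ab' by (simp add: q_def h_def field_simps)
      moreover have "h\<^sup>2 = l\<^sup>2 * (b - a)\<^sup>2" by (simp add: h_def power_mult_distrib)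
      ultimately show ?thesis using aux by simp
    qed
    finally show ?thesis using 1 eq by (simp add: \<mu>_def)
  qed
qed



lemma grad_ineq:
  fixes f :: "real^'c::finite \<Rightarrow> real"
  assumes cv: "convex_on S f" and uS: "u \<in> S" and vS: "v \<in> S" and df: "f differentiable (at u)"
  shows "(\<Sum>c\<in>UNIV. partial_at f u c * (v$c - u$c)) \<le> f v - f u"
proof -
  define D where "D = frechet_derivative f (at u)"
  have hD: "(f has_derivative D) (at u)" using df unfolding D_def by (simp add: frechet_derivative_works)
  have lin: "linear D" using hD has_derivative_linear by blast
  define d where "d = v - u"
  have Dd: "D d = (\<Sum>c\<in>UNIV. partial_at f u c * (v$c - u$c))"
  proof -
    have "D d = D (\<Sum>c\<in>UNIV. (d$c) *s axis c 1)" by (simp add: basis_expansion)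
    also have "\<dots> = (\<Sum>c\<in>UNIV. (d$c) * D (axis c 1))"
      using lin by (simp add: linear_sum linear_scale scalar_mult_eq_scaleR)
    finally show ?thesis by (simp add: partial_at_def D_def d_def mult.commute)
  qed
  define \<phi> where "\<phi> = (\<lambda>s::real. f (u + s *\<^sub>R d))"
  have h1: "((\<lambda>s::real. u + s *\<^sub>R d) has_derivative (\<lambda>s. s *\<^sub>R d)) (at 0)"
    by (auto intro!: derivative_eq_intros)
  have "((f \<circ> (\<lambda>s::real. u + s *\<^sub>R d)) has_derivative (D \<circ> (\<lambda>s. s *\<^sub>R d))) (at 0)"
    by (rule diff_chain_at[OF h1]) (simp add: hD)
  moreover have "D \<circ> (\<lambda>s. s *\<^sub>R d) = (*) (D d)"
    using lin by (auto simp: fun_eq_iff linear_scale)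
  ultimately have "(\<phi> has_field_derivative D d) (at 0)"
    by (simp add: has_field_derivative_def \<phi>_def comp_def)
  hence "(\<phi> has_field_derivative D d) (at 0 within {0<..})" by (rule has_field_derivative_at_within)
  hence lim: "((\<lambda>y. (\<phi> y - \<phi> 0) / (y - 0)) \<longlongrightarrow> D d) (at_right 0)"
    by (simp add: has_field_derivative_iff)
  have ev: "\<forall>\<^sub>F y in at_right (0::real). (\<phi> y - \<phi> 0) / (y - 0) \<le> f v - f u"
  proof -
    have "\<forall>\<^sub>F y in at_right (0::real). y < 1"
      by (simp add: eventually_at_right_field) (auto intro!: exI[of _ 1])
    thus ?thesis using eventually_at_right_less[of "0::real"]
    proof eventually_elim
      case (elim y)
      have "f ((1 - y) *\<^sub>R u + y *\<^sub>R v) \<le> (1 - y) * f u + y * f v"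
        using elim by (intro convex_onD[OF cv] uS vS) auto
      moreover have "(1 - y) *\<^sub>R u + y *\<^sub>R v = u + y *\<^sub>R d"
        by (simp add: d_def algebra_simps)
      ultimately have "\<phi> y - \<phi> 0 \<le> y * (f v - f u)"
        by (simp add: \<phi>_def algebra_simps)
      thus ?case using elim by (simp add: divide_simps mult.commute)
    qed
  qed
  have "D d \<le> f v - f u"
    by (rule tendsto_upperbound[OF lim ev]) simp
  thus ?thesis using Dd by simp
qed



lemma eg_block:
  fixes C :: "'c set" and g :: "nat \<Rightarrow> 'c \<Rightarrow> real" and \<eta> G :: real and T :: nat and u :: "'c \<Rightarrow> real"
  assumes fin: "finite C" and ne: "C \<noteq> {}" and eta: "\<eta> > 0"
    and bnd: "\<And>t c. 1 \<le> t \<Longrightarrow> t \<le> T \<Longrightarrow> c \<in> C \<Longrightarrow> \<bar>g t c\<bar> \<le> G"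
    and u0: "\<And>c. c \<in> C \<Longrightarrow> u c \<ge> 0" and u1: "(\<Sum>c\<in>C. u c) = 1"
  defines "L \<equiv> (\<lambda>n c. \<Sum>s=1..n. g s c)"
  defines "p \<equiv> (\<lambda>t c. exp (- \<eta> * L (t-1) c) / (\<Sum>c'\<in>C. exp (- \<eta> * L (t-1) c')))"
  shows "(\<Sum>t=1..T. \<Sum>c\<in>C. g t c * (p t c - u c)) \<le> ln (real (card C)) / \<eta> + \<eta> * real T * G\<^sup>2 / 2"
proof -
  define W where "W = (\<lambda>n. \<Sum>c\<in>C. exp (- \<eta> * L n c))"
  have Wpos: "W n > 0" for n unfolding W_def using fin ne by (intro sum_pos) auto
  have W0: "W 0 = real (card C)" by (simp add: W_def L_def)
  have step: "ln (W t) \<le> ln (W (t-1)) - \<eta> * (\<Sum>c\<in>C. p t c * g t c) + \<eta>\<^sup>2 * G\<^sup>2 / 2"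
    if t: "1 \<le> t" "t \<le> T" for t
  proof -
    have Lt: "L t c = L (t-1) c + g t c" for c
      using t(1) by (cases t) (simp_all add: L_def)
    have pW: "p t c = exp (- \<eta> * L (t-1) c) / W (t-1)" for c by (simp add: p_def W_def)
    have "W t = (\<Sum>c\<in>C. exp (- \<eta> * L (t-1) c) * exp (\<eta> * (- g t c)))"
      unfolding W_def by (intro sum.cong refl) (simp add: Lt algebra_simps flip: exp_add)
    also have "\<dots> = (\<Sum>c\<in>C. W (t-1) * (p t c * exp (\<eta> * (- g t c))))"
      using Wpos[of "t-1"] by (intro sum.cong refl) (simp add: pW)
    also have "\<dots> = W (t-1) * (\<Sum>c\<in>C. p t c * exp (\<eta> * (- g t c)))"
      by (rule sum_distrib_left[symmetric])
    finally have WW: "W t = W (t-1) * (\<Sum>c\<in>C. p t c * exp (\<eta> * (- g t c)))" .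
    have psum: "(\<Sum>c\<in>C. p t c) = 1"
    proof -
      have "(\<Sum>c\<in>C. p t c) = (\<Sum>c\<in>C. exp (- \<eta> * L (t-1) c)) / W (t-1)"
        unfolding pW by (rule sum_divide_distrib[symmetric])
      also have "\<dots> = 1" using Wpos[of "t-1"] unfolding W_def by simp
      finally show ?thesis .
    qed
    have pnn: "p t c \<ge> 0" for c using Wpos[of "t-1"] unfolding pW by simp
    have gin: "- g t c \<in> {-G..G}" if "c \<in> C" for c using bnd[OF t that] by auto
    have hf: "(\<Sum>c\<in>C. p t c * exp (\<eta> * (- g t c))) \<le> exp (\<eta> * (\<Sum>c\<in>C. p t c * (- g t c)) + \<eta>\<^sup>2 * (G - (-G))\<^sup>2 / 8)"
      by (rule hoeff_discrete[OF fin _ psum]) (use pnn gin eta in auto)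
    have hpos: "(\<Sum>c\<in>C. p t c * exp (\<eta> * (- g t c))) > 0"
      using WW Wpos[of t] Wpos[of "t-1"] by (metis zero_less_mult_pos)
    have "ln (W t) = ln (W (t-1)) + ln (\<Sum>c\<in>C. p t c * exp (\<eta> * (- g t c)))"
      using WW Wpos[of "t-1"] hpos by (simp add: ln_mult)
    also have "ln (\<Sum>c\<in>C. p t c * exp (\<eta> * (- g t c))) \<le> \<eta> * (\<Sum>c\<in>C. p t c * (- g t c)) + \<eta>\<^sup>2 * (G - (-G))\<^sup>2 / 8"
    proof -
      have "ln (\<Sum>c\<in>C. p t c * exp (\<eta> * (- g t c))) \<le> ln (exp (\<eta> * (\<Sum>c\<in>C. p t c * (- g t c)) + \<eta>\<^sup>2 * (G - (-G))\<^sup>2 / 8))"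
        using hf hpos by (subst ln_le_cancel_iff) auto
      thus ?thesis by (simp only: ln_exp)
    qed
    also have "\<eta> * (\<Sum>c\<in>C. p t c * (- g t c)) + \<eta>\<^sup>2 * (G - (-G))\<^sup>2 / 8 = - \<eta> * (\<Sum>c\<in>C. p t c * g t c) + \<eta>\<^sup>2 * G\<^sup>2 / 2"
      by (simp add: sum_negf power2_eq_square algebra_simps)
    finally show ?thesis by simp
  qed
  have ind: "n \<le> T \<Longrightarrow> ln (W n) \<le> ln (real (card C)) - \<eta> * (\<Sum>t=1..n. \<Sum>c\<in>C. p t c * g t c) + real n * (\<eta>\<^sup>2 * G\<^sup>2 / 2)" for n
  proof (induction n)
    case 0 thus ?case by (simp add: W0)
  next
    case (Suc n)
    have "ln (W (Suc n)) \<le> ln (W n) - \<eta> * (\<Sum>c\<in>C. p (Suc n) c * g (Suc n) c) + \<eta>\<^sup>2 * G\<^sup>2 / 2"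
      using step[of "Suc n"] Suc.prems by simp
    moreover have "(\<Sum>t=1..Suc n. \<Sum>c\<in>C. p t c * g t c) = (\<Sum>t=1..n. \<Sum>c\<in>C. p t c * g t c) + (\<Sum>c\<in>C. p (Suc n) c * g (Suc n) c)"
      by simp
    moreover have "real (Suc n) * (\<eta>\<^sup>2 * G\<^sup>2 / 2) = real n * (\<eta>\<^sup>2 * G\<^sup>2 / 2) + \<eta>\<^sup>2 * G\<^sup>2 / 2"
      by (simp add: algebra_simps)
    moreover note Suc.IH[OF Suc_leD[OF Suc.prems]]
    ultimately show ?case by (simp only: distrib_left)
  qed
  have lower: "- \<eta> * (\<Sum>c\<in>C. u c * L T c) \<le> ln (W T)"
  proof -
    have "- \<eta> * L T c \<le> ln (W T)" if "c \<in> C" for c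
    proof -
      have "exp (- \<eta> * L T c) \<le> W T" unfolding W_def
        using fin that by (intro member_le_sum) auto
      hence "ln (exp (- \<eta> * L T c)) \<le> ln (W T)" using Wpos[of T] by (subst ln_le_cancel_iff) auto
      thus ?thesis by (simp only: ln_exp)
    qed
    hence "(\<Sum>c\<in>C. u c * (- \<eta> * L T c)) \<le> (\<Sum>c\<in>C. u c * ln (W T))"
      by (intro sum_mono mult_left_mono u0)
    thus ?thesis by (simp add: u1 sum_distrib_right[symmetric] sum_distrib_left algebra_simps)
  qed
  have swap: "(\<Sum>c\<in>C. u c * L T c) = (\<Sum>t=1..T. \<Sum>c\<in>C. u c * g t c)"
    unfolding L_def by (simp add: sum_distrib_left sum.swap[of _ C])
  have "- \<eta> * (\<Sum>t=1..T. \<Sum>c\<in>C. u c * g t c) \<le> ln (real (card C)) - \<eta> * (\<Sum>t=1..T. \<Sum>c\<in>C. p t c * g t c) + real T * (\<eta>\<^sup>2 * G\<^sup>2 / 2)"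
    using lower ind[of T] swap by simp
  hence "\<eta> * ((\<Sum>t=1..T. \<Sum>c\<in>C. p t c * g t c) - (\<Sum>t=1..T. \<Sum>c\<in>C. u c * g t c)) \<le> \<eta> * (ln (real (card C)) / \<eta> + \<eta> * real T * G\<^sup>2 / 2)"
    using eta by (simp add: algebra_simps power2_eq_square)
  hence "(\<Sum>t=1..T. \<Sum>c\<in>C. p t c * g t c) - (\<Sum>t=1..T. \<Sum>c\<in>C. u c * g t c) \<le> ln (real (card C)) / \<eta> + \<eta> * real T * G\<^sup>2 / 2"
    using eta by simp
  moreover have "(\<Sum>t=1..T. \<Sum>c\<in>C. g t c * (p t c - u c)) = (\<Sum>t=1..T. \<Sum>c\<in>C. p t c * g t c) - (\<Sum>t=1..T. \<Sum>c\<in>C. u c * g t c)"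
    by (simp add: algebra_simps sum_subtractf)
  ultimately show ?thesis by simp
qed


theorem theorem1:
  fixes loss :: "nat \<Rightarrow> real^'c::finite \<Rightarrow> real"
    and blk :: "'c \<Rightarrow> 'k::finite"
    and G :: "'k \<Rightarrow> real"
    and T :: nat
  assumes blocks_nonempty: "surj blk"
    and T_pos: "T \<ge> 1"
    and diff: "\<And>t u. t \<ge> 1 \<Longrightarrow> u \<in> simplex_prod blk \<Longrightarrow> loss t differentiable (at u)"
    and conv: "\<And>t. t \<ge> 1 \<Longrightarrow> convex_on (simplex_prod blk) (loss t)"
    and G_pos: "\<And>k. G k > 0"
    and G_bound: "\<And>t u c. 1 \<le> t \<Longrightarrow> t \<le> T \<Longrightarrow> u \<in> simplex_prod blk \<Longrightarrow>
                    \<bar>partial_at (loss t) u c\<bar> \<le> G (blk c)"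
  shows "\<forall>u \<in> simplex_prod blk.
           (\<Sum>t=1..T. loss t (mweg loss blk
               (\<lambda>k. sqrt (2 * ln (real (block_size blk k)) / real T) / G k) t))
         - (\<Sum>t=1..T. loss t u)
         \<le> sqrt (2 * real T) * (\<Sum>k\<in>UNIV. G k * sqrt (ln (real (block_size blk k))))"
proof
  fix u assume uS: "u \<in> simplex_prod blk"
  define \<eta> where "\<eta> = (\<lambda>k. sqrt (2 * ln (real (block_size blk k)) / real T) / G k)"
  define U where "U = mweg loss blk \<eta>"
  define g where "g = (\<lambda>t c. partial_at (loss t) (U t) c)"
  define L where "L = (\<lambda>n c. \<Sum>s=1..n. g s c)"
  define B where "B = (\<lambda>k. {c. blk c = k})"
  have Bne: "B k \<noteq> {}" for k using blocks_nonempty unfolding B_def surj_def by (metis empty_iff mem_Collect_eq)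
  have Bfin: "finite (B k)" for k by simp
  have cardB: "card (B k) = block_size blk k" for k by (simp add: B_def block_size_def)
  have cum: "cum_grad loss blk \<eta> n $ c = L n c" for n c
  proof (induction n)
    case 0 thus ?case by (simp add: L_def)
  next
    case (Suc n)
    have "U (Suc n) = mweg_from blk \<eta> n (cum_grad loss blk \<eta> n)" by (simp add: U_def mweg_def)
    thus ?case using Suc by (simp add: L_def g_def grad_vec_def)
  qed
  have Uform: "U t $ c = exp (- \<eta> (blk c) * L (t-1) c) / (\<Sum>c'\<in>B (blk c). exp (- \<eta> (blk c) * L (t-1) c'))"
    for t c
  proof (cases "t - 1 = 0")
    case True
    hence "L (t-1) = (\<lambda>c. 0)" by (simp add: L_def fun_eq_iff)
    thus ?thesis using True
      by (simp add: U_def mweg_def mweg_from_def uniform_init_def B_def block_size_def)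
  next
    case False
    thus ?thesis by (simp add: U_def mweg_def mweg_from_def eg_weights_def cum B_def)
  qed
  have den_pos: "(\<Sum>c'\<in>B k. exp (- \<eta> k * L n c')) > 0" for k n
    using Bne[of k] by (intro sum_pos) auto
  have US: "U t \<in> simplex_prod blk" for t
  proof -
    have "0 \<le> U t $ c" for c unfolding Uform by (rule divide_nonneg_pos[OF _ den_pos]) simp
    moreover have "(\<Sum>c\<in>{c. blk c = k}. U t $ c) = 1" for k
    proof -
      have "(\<Sum>c\<in>{c. blk c = k}. U t $ c) = (\<Sum>c\<in>B k. exp (- \<eta> k * L (t-1) c) / (\<Sum>c'\<in>B k. exp (- \<eta> k * L (t-1) c')))"
        by (intro sum.cong) (auto simp: Uform B_def)
      also have "\<dots> = 1" using den_pos[of k "t-1"] by (simp flip: sum_divide_distrib)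
      finally show ?thesis .
    qed
    ultimately show ?thesis by (simp add: simplex_prod_def)
  qed
  have u0: "u $ c \<ge> 0" for c using uS by (simp add: simplex_prod_def)
  have u1: "(\<Sum>c\<in>B k. u $ c) = 1" for k using uS by (simp add: simplex_prod_def B_def)
  have lin: "loss t (U t) - loss t u \<le> (\<Sum>c\<in>UNIV. g t c * (U t $ c - u $ c))" if "1 \<le> t" for t
  proof -
    have "(\<Sum>c\<in>UNIV. partial_at (loss t) (U t) c * (u$c - U t$c)) \<le> loss t u - loss t (U t)"
      by (rule grad_ineq[OF conv[OF that] US uS diff[OF that US]])
    moreover have "(\<Sum>c\<in>UNIV. partial_at (loss t) (U t) c * (u$c - U t$c)) = - (\<Sum>c\<in>UNIV. g t c * (U t $ c - u $ c))"
      by (simp add: g_def algebra_simps sum_negf[symmetric])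
    ultimately show ?thesis by simp
  qed
  have regroup: "(\<Sum>c\<in>UNIV. g t c * (U t $ c - u $ c)) = (\<Sum>k\<in>UNIV. \<Sum>c\<in>B k. g t c * (U t $ c - u $ c))" for t
    using sum.group[of "UNIV::'c set" "UNIV::'k set" blk "\<lambda>c. g t c * (U t $ c - u $ c)"]
    by (simp add: B_def)
  have blockb: "(\<Sum>t=1..T. \<Sum>c\<in>B k. g t c * (U t $ c - u $ c)) \<le> sqrt (2 * real T) * (G k * sqrt (ln (real (block_size blk k))))" for k
  proof (cases "block_size blk k = 1")
    case True
    then obtain c0 where c0: "B k = {c0}" using cardB[of k] by (metis card_1_singletonE)
    have bc0: "blk c0 = k" using c0 unfolding B_def by blast
    have "U t $ c0 = 1" for t unfolding Uform bc0 c0 by simp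
    moreover have "u $ c0 = 1" using u1[of k] c0 by simp
    ultimately show ?thesis using c0 True by simp
  next
    case False
    have N2: "block_size blk k \<ge> 2" using False cardB[of k] Bne[of k] Bfin[of k]
      by (metis One_nat_def card_0_eq less_2_cases not_less)
    define a where "a = ln (real (block_size blk k))"
    have a0: "a > 0" using N2 by (simp add: a_def)
    have T0: "real T > 0" using T_pos by simp
    define s where "s = sqrt (2 * a / real T)"
    have s0: "s > 0" using a0 T0 by (simp add: s_def)
    have ss: "s^2 = 2 * a / real T" using a0 T0 by (simp add: s_def)
    have eta_k: "\<eta> k = s / G k" by (simp add: \<eta>_def s_def a_def)
    have etapos: "\<eta> k > 0" using s0 G_pos[of k] by (simp add: eta_k)
    have bnd: "\<bar>g t c\<bar> \<le> G k" if "1 \<le> t" "t \<le> T" "c \<in> B k" for t c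
      using G_bound[OF that(1,2) US[of t], of c] that(3) by (simp add: g_def B_def)
    have main: "(\<Sum>t=1..T. \<Sum>c\<in>B k. g t c * ((\<lambda>t c. exp (- \<eta> k * L (t-1) c) / (\<Sum>c'\<in>B k. exp (- \<eta> k * L (t-1) c'))) t c - u $ c))
        \<le> ln (real (card (B k))) / \<eta> k + \<eta> k * real T * (G k)\<^sup>2 / 2"
      unfolding L_def
      by (rule eg_block[OF Bfin Bne etapos bnd _ u1]) (use u0 in auto)
    have eqs: "(\<Sum>t=1..T. \<Sum>c\<in>B k. g t c * (U t $ c - u $ c)) =
       (\<Sum>t=1..T. \<Sum>c\<in>B k. g t c * ((\<lambda>t c. exp (- \<eta> k * L (t-1) c) / (\<Sum>c'\<in>B k. exp (- \<eta> k * L (t-1) c'))) t c - u $ c))"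
      by (intro sum.cong refl) (auto simp: Uform B_def)
    have "ln (real (card (B k))) / \<eta> k + \<eta> k * real T * (G k)\<^sup>2 / 2 = G k * s * real T"
    proof -
      have "a = s^2 * real T / 2" using ss T0 by (simp add: field_simps)
      thus ?thesis using s0 G_pos[of k] by (simp add: cardB a_def[symmetric] eta_k field_simps power2_eq_square)
    qed
    moreover have "sqrt (2 * real T) * sqrt a = s * real T"
    proof -
      have "(s * real T)^2 = 2 * real T * a" using ss T0 by (simp add: power_mult_distrib field_simps power2_eq_square)
      hence "s * real T = sqrt (2 * real T * a)" using s0 T0 by (metis less_imp_le mult_nonneg_nonneg of_nat_0_le_iff real_sqrt_unique)
      thus ?thesis by (simp add: real_sqrt_mult)
    qed
    ultimately show ?thesis using main eqs by (simp add: a_def[symmetric] algebra_simps)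
  qed
  have "(\<Sum>t=1..T. loss t (U t)) - (\<Sum>t=1..T. loss t u) = (\<Sum>t=1..T. loss t (U t) - loss t u)"
    by (simp add: sum_subtractf)
  also have "\<dots> \<le> (\<Sum>t=1..T. \<Sum>c\<in>UNIV. g t c * (U t $ c - u $ c))"
    by (intro sum_mono lin) auto
  also have "\<dots> = (\<Sum>k\<in>UNIV. \<Sum>t=1..T. \<Sum>c\<in>B k. g t c * (U t $ c - u $ c))"
    unfolding regroup by (rule sum.swap)
  also have "\<dots> \<le> (\<Sum>k\<in>UNIV. sqrt (2 * real T) * (G k * sqrt (ln (real (block_size blk k)))))"
    by (intro sum_mono blockb)
  also have "\<dots> = sqrt (2 * real T) * (\<Sum>k\<in>UNIV. G k * sqrt (ln (real (block_size blk k))))"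
    by (simp add: sum_distrib_left)
  finally show "(\<Sum>t=1..T. loss t (mweg loss blk
               (\<lambda>k. sqrt (2 * ln (real (block_size blk k)) / real T) / G k) t))
         - (\<Sum>t=1..T. loss t u)
         \<le> sqrt (2 * real T) * (\<Sum>k\<in>UNIV. G k * sqrt (ln (real (block_size blk k))))"
    by (simp add: U_def \<eta>_def)
qed

end
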